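(* Let $\mathcal H$ be a finite-dimensional Hilbert space, $H$ a Hermitian operator on $\mathcal H$, $\beta$ a finite nonzero real number, and $\gamma_{\beta,H}=e^{-\beta H}/\mathrm{Tr}\,e^{-\beta H}$ (a full-rank density operator). For a density operator $\rho$ on $\mathcal H$ define the weight of athermality $$A_w(\rho)=\min_{\tau\in\mathscr D(\mathcal H)}\{a\ge 0:\ \rho=(1-a)\gamma_{\beta,H}+a\tau\}.$$ Then this minimum is attained and $$A_w(\rho)=a:=1-\mu_{\min}\!\left(\gamma_{\beta,H}^{-1/2}\,\rho\,\gamma_{\beta,H}^{-1/2}\right),$$ where $\mu_{\min}$ denotes the smallest eigenvalue; moreover $0\le a\le 1$, with $a=0$ if and only if $\rho=\gamma_{\beta,H}$. If $\rho\neq\gamma_{\beta,H}$, the density operator $\tau$ with $\rho=(1-a)\gamma_{\beta,H}+a\tau$ for this minimal $a$ is unique and equals $\tau=\big(\rho-(1-a)\gamma_{\beta,H}\big)/a$.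
   Context: $\mathscr D(\mathcal H)$ denotes the set of density operators (positive semidefinite, unit trace) on $\mathcal H$. $\gamma^{\pm1/2}$ denote the positive square roots of $\gamma$ and of its inverse. *)

theory Defs
  imports Complex_Main "Jordan_Normal_Form.Matrix" "Jordan_Normal_Form.Char_Poly"
begin

text \<open>Operators on an n-dimensional Hilbert space are n x n complex matrices.\<close>

definition adjoint_mat :: "complex mat \<Rightarrow> complex mat" where
  "adjoint_mat A = mat (dim_col A) (dim_row A) (\<lambda>(i,j). cnj (A $$ (j,i)))"

definition hermitian_mat :: "nat \<Rightarrow> complex mat \<Rightarrow> bool" where
  "hermitian_mat n A \<longleftrightarrow> A \<in> carrier_mat n n \<and> adjoint_mat A = A"

definition psd_mat :: "nat \<Rightarrow> complex mat \<Rightarrow> bool" where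
  "psd_mat n A \<longleftrightarrow> hermitian_mat n A \<and>
     (\<forall>v \<in> carrier_vec n. 0 \<le> Re ((A *\<^sub>v v) \<bullet>c v))"

definition trace_mat :: "complex mat \<Rightarrow> complex" where
  "trace_mat A = (\<Sum>i<dim_row A. A $$ (i,i))"

definition density_mat :: "nat \<Rightarrow> complex mat \<Rightarrow> bool" where
  "density_mat n A \<longleftrightarrow> psd_mat n A \<and> trace_mat A = 1"

definition exp_mat :: "complex mat \<Rightarrow> complex mat" where
  "exp_mat A = mat (dim_row A) (dim_col A)
      (\<lambda>(i,j). \<Sum>k. (A ^\<^sub>m k) $$ (i,j) / of_nat (fact k))"

definition inverse_mat :: "nat \<Rightarrow> complex mat \<Rightarrow> complex mat" where
  "inverse_mat n A = (THE B. B \<in> carrier_mat n n \<and> A * B = 1\<^sub>m n \<and> B * A = 1\<^sub>m n)"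

definition psd_sqrt :: "nat \<Rightarrow> complex mat \<Rightarrow> complex mat" where
  "psd_sqrt n A = (THE S. psd_mat n S \<and> S * S = A)"

definition gibbs_state :: "real \<Rightarrow> complex mat \<Rightarrow> complex mat" where
  "gibbs_state \<beta> H = (1 / trace_mat (exp_mat ((- complex_of_real \<beta>) \<cdot>\<^sub>m H)))
                        \<cdot>\<^sub>m exp_mat ((- complex_of_real \<beta>) \<cdot>\<^sub>m H)"

text \<open>Smallest eigenvalue of a Hermitian matrix (whose eigenvalues are real).\<close>
definition min_eigenvalue :: "complex mat \<Rightarrow> real" where
  "min_eigenvalue M = Min {r::real. eigenvalue M (complex_of_real r)}"

definition athermality_set :: "nat \<Rightarrow> complex mat \<Rightarrow> complex mat \<Rightarrow> real set" where
  "athermality_set n \<gamma> \<rho> = {a. 0 \<le> a \<and> (\<exists>\<tau>. density_mat n \<tau> \<and>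
       \<rho> = complex_of_real (1 - a) \<cdot>\<^sub>m \<gamma> + complex_of_real a \<cdot>\<^sub>m \<tau>)}"

definition weight_of_athermality :: "nat \<Rightarrow> real \<Rightarrow> complex mat \<Rightarrow> complex mat \<Rightarrow> real" where
  "weight_of_athermality n \<beta> H \<rho> = Inf (athermality_set n (gibbs_state \<beta> H) \<rho>)"

end

theory Submission
  imports Defs "Jordan_Normal_Form.Schur_Decomposition" "Jordan_Normal_Form.Spectral_Radius"
begin


definition dgc :: "nat \<Rightarrow> (nat \<Rightarrow> complex) \<Rightarrow> complex mat" where
  "dgc n f = mat n n (\<lambda>(i,j). if i = j then f i else 0)"

declare index_mult_mat(1)[simp del] index_mult_mat_vec[simp del]

lemma dgc_carrier[simp]: "dgc n f \<in> carrier_mat n n" and dgc_dims[simp]: "dim_row (dgc n f) = n" "dim_col (dgc n f) = n"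
  by (auto simp: dgc_def)

lemma dgc_index[simp]: "i < n \<Longrightarrow> j < n \<Longrightarrow> dgc n f $$ (i,j) = (if i = j then f i else 0)"
  by (simp add: dgc_def)

lemma mult_mat_vec_idx: assumes "A \<in> carrier_mat n m" "v \<in> carrier_vec m" "i < n"
  shows "(A *\<^sub>v v) $ i = (\<Sum>k<m. A $$ (i,k) * v $ k)"
  using assms by (auto simp: index_mult_mat_vec scalar_prod_def atLeast0LessThan intro!: sum.cong)

lemma mult_idx: assumes "i < dim_row A" "j < dim_col B" "dim_col A = dim_row B"
  shows "(A * B) $$ (i,j) = (\<Sum>k<dim_row B. A $$ (i,k) * B $$ (k,j))"
  using assms by (auto simp: index_mult_mat(1) scalar_prod_def atLeast0LessThan intro!: sum.cong)

lemma adj_dims[simp]: "dim_row (adjoint_mat A) = dim_col A" "dim_col (adjoint_mat A) = dim_row A"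
  by (auto simp: adjoint_mat_def)

lemma adj_carrier[simp]: "A \<in> carrier_mat n m \<Longrightarrow> adjoint_mat A \<in> carrier_mat m n"
  by (auto simp: adjoint_mat_def)

lemma adj_index[simp]: "i < dim_col A \<Longrightarrow> j < dim_row A \<Longrightarrow> adjoint_mat A $$ (i,j) = cnj (A $$ (j,i))"
  by (auto simp: adjoint_mat_def)

lemma adj_adj[simp]: "adjoint_mat (adjoint_mat A) = A"
  by (rule eq_matI) auto

lemma adj_mult: assumes "dim_col A = dim_row B"
  shows "adjoint_mat (A * B) = adjoint_mat B * adjoint_mat A"
proof (rule eq_matI)
  fix i j assume ij: "i < dim_row (adjoint_mat B * adjoint_mat A)" "j < dim_col (adjoint_mat B * adjoint_mat A)"
  then show "adjoint_mat (A * B) $$ (i, j) = (adjoint_mat B * adjoint_mat A) $$ (i, j)"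
  proof -
    have i: "i < dim_col B" and j: "j < dim_row A" using ij by auto
    have "adjoint_mat (A * B) $$ (i, j) = cnj ((A * B) $$ (j,i))" using i j by simp
    also have "\<dots> = cnj (\<Sum>k<dim_row B. A $$ (j,k) * B $$ (k,i))"
      using i j assms by (subst mult_idx) auto
    also have "\<dots> = (\<Sum>k<dim_row B. adjoint_mat B $$ (i,k) * adjoint_mat A $$ (k,j))"
      using i j assms by (auto simp: mult.commute intro!: sum.cong)
    also have "\<dots> = (adjoint_mat B * adjoint_mat A) $$ (i, j)"
      using i j assms by (subst mult_idx) auto
    finally show ?thesis .
  qed
qed (use assms in auto)

lemma adj_add: assumes "A \<in> carrier_mat n m" "B \<in> carrier_mat n m"
  shows "adjoint_mat (A + B) = adjoint_mat A + adjoint_mat B"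
  by (rule eq_matI) (use assms in auto)

lemma adj_minus: assumes "A \<in> carrier_mat n m" "B \<in> carrier_mat n m"
  shows "adjoint_mat (A - B) = adjoint_mat A - adjoint_mat B"
  by (rule eq_matI) (use assms in auto)

lemma adj_smult: "adjoint_mat (c \<cdot>\<^sub>m A) = cnj c \<cdot>\<^sub>m adjoint_mat A"
  by (rule eq_matI) auto

lemma adj_one[simp]: "adjoint_mat (1\<^sub>m n) = 1\<^sub>m n"
  by (rule eq_matI) auto

lemma adj_dgc: "adjoint_mat (dgc n f) = dgc n (\<lambda>i. cnj (f i))"
  by (rule eq_matI) auto

lemma cscalar_sum: assumes "v \<in> carrier_vec n" "w \<in> carrier_vec n"
  shows "v \<bullet>c w = (\<Sum>i<n. v $ i * cnj (w $ i))"
  using assms by (auto simp: scalar_prod_def atLeast0LessThan intro!: sum.cong)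

lemma mv_cscalar: assumes A: "A \<in> carrier_mat n m" and v: "v \<in> carrier_vec m" and w: "w \<in> carrier_vec n"
  shows "(A *\<^sub>v v) \<bullet>c w = v \<bullet>c (adjoint_mat A *\<^sub>v w)"
proof -
  have Av: "A *\<^sub>v v \<in> carrier_vec n" using A v by simp
  have Aw: "adjoint_mat A *\<^sub>v w \<in> carrier_vec m" by (rule mult_mat_vec_carrier[OF adj_carrier[OF A] w])
  have "(A *\<^sub>v v) \<bullet>c w = (\<Sum>i<n. (A *\<^sub>v v) $ i * cnj (w $ i))"
    by (rule cscalar_sum[OF Av w])
  also have "\<dots> = (\<Sum>i<n. (\<Sum>k<m. A $$ (i,k) * v $ k) * cnj (w $ i))"
    using assms by (simp add: mult_mat_vec_idx)
  also have "\<dots> = (\<Sum>i<n. \<Sum>k<m. A $$ (i,k) * v $ k * cnj (w $ i))"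
    by (simp add: sum_distrib_right)
  also have "\<dots> = (\<Sum>k<m. \<Sum>i<n. A $$ (i,k) * v $ k * cnj (w $ i))"
    by (rule sum.swap)
  also have "\<dots> = (\<Sum>k<m. v $ k * cnj (\<Sum>i<n. cnj (A $$ (i,k)) * w $ i))"
    by (simp add: sum_distrib_left mult_ac)
  also have "\<dots> = (\<Sum>k<m. v $ k * cnj ((adjoint_mat A *\<^sub>v w) $ k))"
    using assms by (simp add: mult_mat_vec_idx[OF adj_carrier[OF A] w])
  also have "\<dots> = v \<bullet>c (adjoint_mat A *\<^sub>v w)"
    by (rule cscalar_sum[OF v Aw, symmetric])
  finally show ?thesis .
qed

lemma udu_idx: assumes U: "U \<in> carrier_mat n n" and i: "i < n" and j: "j < n"
  shows "(U * dgc n f * adjoint_mat U) $$ (i,j) = (\<Sum>k<n. U $$ (i,k) * f k * cnj (U $$ (j,k)))"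
proof -
  have *: "(U * dgc n f) $$ (i,k) = U $$ (i,k) * f k" if "k < n" for k
    using U i that by (simp add: mult_idx if_distrib sum.delta cong: if_cong del: index_mult_mat)
  have "(U * dgc n f * adjoint_mat U) $$ (i,j) = (\<Sum>k<n. (U * dgc n f) $$ (i,k) * adjoint_mat U $$ (k,j))"
    using U i j by (subst mult_idx) auto
  then show ?thesis using U i j by (simp add: *)
qed



lemma adjU_U_idx: assumes "U \<in> carrier_mat n n" "i < n" "j < n"
  shows "(adjoint_mat U * U) $$ (i,j) = (\<Sum>k<n. cnj (U $$ (k,i)) * U $$ (k,j))"
  using assms by (subst mult_idx) auto

lemma unitary_right: assumes "U \<in> carrier_mat n n" "adjoint_mat U * U = 1\<^sub>m n"
  shows "U * adjoint_mat U = 1\<^sub>m n"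
  using mat_mult_left_right_inverse[OF adj_carrier[OF assms(1)] assms(1) assms(2)] .

lemma cscalar_smult: assumes "x \<in> carrier_vec n" "y \<in> carrier_vec n"
  shows "(a \<cdot>\<^sub>v x) \<bullet>c (b \<cdot>\<^sub>v y) = a * cnj b * (x \<bullet>c y)"
  using assms by (simp add: cscalar_sum sum_distrib_left mult_ac)

definition nrm :: "complex vec \<Rightarrow> complex vec" where
  "nrm w = complex_of_real (1 / sqrt (Re (w \<bullet>c w))) \<cdot>\<^sub>v w"

lemma self_cscalar_real: assumes "w \<in> carrier_vec n"
  shows "w \<bullet>c w = complex_of_real (Re (w \<bullet>c w))" "0 \<le> Re (w \<bullet>c w)"
proof -
  have "w \<bullet>c w \<ge> 0" by (rule conjugate_square_ge_0_vec)
  then show "w \<bullet>c w = complex_of_real (Re (w \<bullet>c w))" "0 \<le> Re (w \<bullet>c w)"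
    by (auto simp: less_eq_complex_def complex_eq_iff)
qed

lemma self_cscalar_pos: assumes "w \<in> carrier_vec n" "w \<noteq> 0\<^sub>v n"
  shows "0 < Re (w \<bullet>c w)"
proof -
  have "w \<bullet>c w > 0" using assms by simp
  then show ?thesis by (auto simp: less_complex_def less_eq_complex_def)
qed

lemma nrm_carrier[simp]: "w \<in> carrier_vec n \<Longrightarrow> nrm w \<in> carrier_vec n"
  by (simp add: nrm_def)

lemma nrm_unit: assumes "w \<in> carrier_vec n" "w \<noteq> 0\<^sub>v n"
  shows "nrm w \<bullet>c nrm w = 1"
proof -
  define r where "r = Re (w \<bullet>c w)"
  have r: "0 < r" using self_cscalar_pos[OF assms] r_def by simp
  have "nrm w \<bullet>c nrm w = complex_of_real (1 / sqrt r) * cnj (complex_of_real (1 / sqrt r)) * (w \<bullet>c w)"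
    unfolding nrm_def r_def by (rule cscalar_smult[OF assms(1) assms(1)])
  also have "w \<bullet>c w = complex_of_real r" using self_cscalar_real(1)[OF assms(1)] r_def by simp
  also have "complex_of_real (1 / sqrt r) * cnj (complex_of_real (1 / sqrt r)) * complex_of_real r
     = complex_of_real ((1 / sqrt r) * (1 / sqrt r) * r)" by (simp only: of_real_mult complex_cnj_complex_of_real)
  also have "(1 / sqrt r) * (1 / sqrt r) * r = 1" using r by (simp add: field_simps)
  finally show ?thesis by simp
qed

lemma nrm_unit_id: assumes "w \<bullet>c w = 1" shows "nrm w = w"
  using assms by (simp add: nrm_def)

lemma orthonormal_unitary:
  assumes ws: "set ws \<subseteq> carrier_vec N" "length ws = N"
    and on: "\<And>i j. i < N \<Longrightarrow> j < N \<Longrightarrow> ws ! i \<bullet>c ws ! j = (if i = j then 1 else 0)"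
  shows "adjoint_mat (mat_of_cols N ws) * mat_of_cols N ws = 1\<^sub>m N"
proof (rule eq_matI)
  let ?U = "mat_of_cols N ws"
  have U: "?U \<in> carrier_mat N N" using ws by (metis mat_of_cols_carrier(1))
  fix i j assume "i < dim_row (1\<^sub>m N :: complex mat)" "j < dim_col (1\<^sub>m N :: complex mat)"
  then have i: "i < N" and j: "j < N" by auto
  have "(adjoint_mat ?U * ?U) $$ (i,j) = (\<Sum>k<N. cnj (?U $$ (k,i)) * ?U $$ (k,j))"
    by (rule adjU_U_idx[OF U i j])
  also have "\<dots> = (\<Sum>k<N. (ws ! j) $ k * cnj ((ws ! i) $ k))"
    using i j ws by (auto simp: mat_of_cols_index mult.commute intro!: sum.cong)
  also have "\<dots> = ws ! j \<bullet>c ws ! i"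
    using i j ws by (intro cscalar_sum[symmetric]) auto
  also have "\<dots> = 1\<^sub>m N $$ (i,j)" using on[OF j i] i j by auto
  finally show "(adjoint_mat ?U * ?U) $$ (i,j) = 1\<^sub>m N $$ (i,j)" .
qed (use ws in auto)



lemma assoc3: "A \<in> carrier_mat n n \<Longrightarrow> B \<in> carrier_mat n n \<Longrightarrow> C \<in> carrier_mat n n \<Longrightarrow> A * B * C = A * (B * C)"
  by (rule assoc_mult_mat)

lemma cscalar_smult_l: assumes "x \<in> carrier_vec n" "y \<in> carrier_vec n"
  shows "(a \<cdot>\<^sub>v x) \<bullet>c y = a * (x \<bullet>c y)"
  using assms by (simp add: cscalar_sum sum_distrib_left mult_ac)

lemma cscalar_smult_r: assumes "x \<in> carrier_vec n" "y \<in> carrier_vec n"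
  shows "x \<bullet>c (b \<cdot>\<^sub>v y) = cnj b * (x \<bullet>c y)"
  using assms by (simp add: cscalar_sum sum_distrib_left mult_ac)

lemma unit_eigen:
  assumes A: "(A :: complex mat) \<in> carrier_mat N N" and N: "0 < N"
  shows "\<exists>u e. u \<in> carrier_vec N \<and> u \<bullet>c u = 1 \<and> A *\<^sub>v u = e \<cdot>\<^sub>v u"
proof -
  from spectrum_non_empty[OF A N] obtain e where "e \<in> spectrum A" by auto
  then have ev: "eigenvalue A e" by (simp add: spectrum_def)
  from find_eigenvector[OF A ev] obtain v where "eigenvector A v e" by blast
  then have v: "v \<in> carrier_vec N" "v \<noteq> 0\<^sub>v N" "A *\<^sub>v v = e \<cdot>\<^sub>v v"
    using A by (auto simp: eigenvector_def)
  define c where "c = complex_of_real (1 / sqrt (Re (v \<bullet>c v)))"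
  have "nrm v = c \<cdot>\<^sub>v v" by (simp add: nrm_def c_def)
  moreover have "A *\<^sub>v (c \<cdot>\<^sub>v v) = e \<cdot>\<^sub>v (c \<cdot>\<^sub>v v)"
    using v A by (simp add: mult_mat_vec smult_smult_assoc mult.commute)
  ultimately show ?thesis using nrm_unit[OF v(1,2)] nrm_carrier[OF v(1)] by metis
qed

lemma spectral:
  assumes "A \<in> carrier_mat n n" "adjoint_mat A = A"
  shows "\<exists>U (d::nat \<Rightarrow> real). U \<in> carrier_mat n n \<and> adjoint_mat U * U = 1\<^sub>m n \<and> U * adjoint_mat U = 1\<^sub>m n
     \<and> A = U * dgc n (\<lambda>i. complex_of_real (d i)) * adjoint_mat U"
  using assms
proof (induction n arbitrary: A)
  case 0
  show ?case
    by (rule exI[of _ "1\<^sub>m 0"], rule exI[of _ "\<lambda>_. 0"]) (use 0 in \<open>auto intro!: eq_matI\<close>)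
next
  case (Suc n)
  define N where "N = Suc n"
  have A: "A \<in> carrier_mat N N" and hA: "adjoint_mat A = A" using Suc N_def by auto
  obtain u e where u: "u \<in> carrier_vec N" "u \<bullet>c u = 1" and Au: "A *\<^sub>v u = e \<cdot>\<^sub>v u"
    using unit_eigen[OF A] N_def by auto
  have u0: "u \<noteq> 0\<^sub>v N" using u by auto
  have "(A *\<^sub>v u) \<bullet>c u = u \<bullet>c (A *\<^sub>v u)" using mv_cscalar[OF A u(1) u(1)] hA by simp
  then have "e * (u \<bullet>c u) = cnj e * (u \<bullet>c u)" using Au u by (simp add: cscalar_smult_l[of _ N] cscalar_smult_r[of _ N])
  then have e_real: "e = complex_of_real (Re e)" using u(2) by (simp add: complex_eq_iff)
  interpret cof_vec_space N "TYPE(complex)" .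
  obtain b where b: "b = basis_completion u" by blast
  from basis_completion[OF u(1) u0, folded b]
  have bb: "set b \<subseteq> carrier_vec N" "distinct b" "\<not> lin_dep (set b)" "length b = N" "hd b = u" by auto
  obtain bs where bu: "b = u # bs" using bb(4,5) N_def by (cases b) auto
  define ws where "ws = gram_schmidt N b"
  from gram_schmidt_result[OF bb(1-3) ws_def]
  have ws: "corthogonal ws" "set ws \<subseteq> carrier_vec N" "length ws = N" using bb(4) by auto
  have hdws: "hd ws = u" unfolding ws_def bu using u(1) by simp
  define ws' where "ws' = map nrm ws"
  have ws': "set ws' \<subseteq> carrier_vec N" "length ws' = N" using ws by (auto simp: ws'_def)
  have on: "ws' ! i \<bullet>c ws' ! j = (if i = j then 1 else 0)" if ij: "i < N" "j < N" for i j
  proof -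
    have wi: "ws ! i \<in> carrier_vec N" and wj: "ws ! j \<in> carrier_vec N" using ws ij by auto
    have wi0: "ws ! i \<noteq> 0\<^sub>v N"
    proof
      assume "ws ! i = 0\<^sub>v N"
      then have "ws ! i \<bullet>c ws ! i = 0" by simp
      then show False using corthogonalD[OF ws(1), of i i] ij ws(3) by auto
    qed
    show ?thesis
    proof (cases "i = j")
      case True
      then show ?thesis using nrm_unit[OF wi wi0] ij ws by (simp add: ws'_def)
    next
      case False
      have "ws ! i \<bullet>c ws ! j = 0" using corthogonalD[OF ws(1), of i j] ij ws(3) False by auto
      then show ?thesis using False ij ws wi wj unfolding ws'_def nrm_def
        by (simp only: nth_map cscalar_smult[OF wi wj]) simp
    qed
  qed
  define U1 where "U1 = mat_of_cols N ws'"
  have U1: "U1 \<in> carrier_mat N N" using ws' by (metis U1_def mat_of_cols_carrier(1))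
  have U1u: "adjoint_mat U1 * U1 = 1\<^sub>m N" unfolding U1_def by (rule orthonormal_unitary[OF ws' on])
  have U1u': "U1 * adjoint_mat U1 = 1\<^sub>m N" by (rule unitary_right[OF U1 U1u])
  have ws'0: "ws' ! 0 = u" using hdws ws u(2) N_def by (cases ws) (auto simp: ws'_def nrm_unit_id)
  have U1col0: "U1 $$ (k,0) = u $ k" if "k < N" for k
    using that ws' ws'0 N_def by (simp add: U1_def mat_of_cols_index)
  define A' where "A' = adjoint_mat U1 * A * U1"
  have aU1: "adjoint_mat U1 \<in> carrier_mat N N" using U1 by simp
  have A': "A' \<in> carrier_mat N N" using A U1 aU1 unfolding A'_def by (meson mult_carrier_mat)
  have hA': "adjoint_mat A' = A'"
    using A U1 hA by (simp add: A'_def adj_mult assoc3[of _ N])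
  have AU1: "(A * U1) $$ (k,0) = e * u $ k" if "k < N" for k
  proof -
    have "(A * U1) $$ (k,0) = (\<Sum>l<N. A $$ (k,l) * u $ l)"
      using A U1 that N_def U1col0 by (subst mult_idx) auto
    also have "\<dots> = (A *\<^sub>v u) $ k" using A u that by (simp add: mult_mat_vec_idx)
    finally show ?thesis using Au that u by simp
  qed
  have A'col0: "A' $$ (i,0) = (if i = 0 then e else 0)" if "i < N" for i
  proof -
    have "A' $$ (i,0) = (\<Sum>k<N. cnj (U1 $$ (k,i)) * (e * u $ k))"
      unfolding A'_def using A U1 that N_def AU1 by (subst assoc3[of _ N]) (auto simp: mult_idx)
    also have "\<dots> = (\<Sum>k<N. e * ((ws' ! 0) $ k * cnj ((ws' ! i) $ k)))"
      using that ws' ws'0 N_def by (auto simp: U1_def mat_of_cols_index mult_ac intro!: sum.cong)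
    also have "\<dots> = e * (\<Sum>k<N. (ws' ! 0) $ k * cnj ((ws' ! i) $ k))"
      by (simp only: sum_distrib_left)
    also have "\<dots> = e * (ws' ! 0 \<bullet>c ws' ! i)"
      using that ws' N_def by (subst cscalar_sum[of _ N]) auto
    finally show ?thesis using on[of 0 i] that N_def by auto
  qed
  have A'row0: "A' $$ (0,j) = (if j = 0 then e else 0)" if "j < N" for j
  proof -
    have "A' $$ (0,j) = adjoint_mat A' $$ (0,j)" using hA' by simp
    also have "\<dots> = cnj (A' $$ (j,0))" using A' that N_def by simp
    finally show ?thesis using A'col0[OF that] e_real by (metis complex_cnj_complex_of_real complex_cnj_zero)
  qed
  define A3 where "A3 = mat n n (\<lambda>(i,j). A' $$ (Suc i, Suc j))"
  have A3: "A3 \<in> carrier_mat n n" by (simp add: A3_def)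
  have hA3: "adjoint_mat A3 = A3"
  proof (rule eq_matI)
    fix i j assume "i < dim_row A3" "j < dim_col A3"
    then have ij: "i < n" "j < n" by (auto simp: A3_def)
    have "adjoint_mat A3 $$ (i,j) = cnj (A' $$ (Suc j, Suc i))" using ij by (simp add: A3_def)
    also have "\<dots> = adjoint_mat A' $$ (Suc i, Suc j)" using ij A' N_def by simp
    finally show "adjoint_mat A3 $$ (i,j) = A3 $$ (i,j)" using hA' ij by (simp add: A3_def)
  qed (auto simp: A3_def)
  from Suc.IH[OF A3 hA3] obtain U3 d3 where U3: "U3 \<in> carrier_mat n n" "adjoint_mat U3 * U3 = 1\<^sub>m n"
    and A3d: "A3 = U3 * dgc n (\<lambda>i. complex_of_real (d3 i)) * adjoint_mat U3" by blast
  define V where "V = mat N N (\<lambda>(i,j). if i = 0 \<or> j = 0 then (if i = j then 1 else 0) else U3 $$ (i-1,j-1))"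
  define d where "d = (\<lambda>i. if i = 0 then Re e else d3 (i - 1))"
  have V: "V \<in> carrier_mat N N" by (simp add: V_def)
  have Vu: "adjoint_mat V * V = 1\<^sub>m N"
  proof (rule eq_matI)
    fix i j assume "i < dim_row (1\<^sub>m N :: complex mat)" "j < dim_col (1\<^sub>m N :: complex mat)"
    then have i: "i < N" and j: "j < N" by auto
    have "(adjoint_mat V * V) $$ (i,j) = (\<Sum>k<N. cnj (V $$ (k,i)) * V $$ (k,j))"
      by (rule adjU_U_idx[OF V i j])
    also have "\<dots> = cnj (V $$ (0,i)) * V $$ (0,j) + (\<Sum>k<n. cnj (V $$ (Suc k,i)) * V $$ (Suc k,j))"
      unfolding N_def by (rule sum.lessThan_Suc_shift)
    also have "\<dots> = 1\<^sub>m N $$ (i,j)"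
    proof (cases "i = 0 \<or> j = 0")
      case True
      then show ?thesis using i j by (auto simp: V_def N_def)
    next
      case False
      then obtain i' j' where ij: "i = Suc i'" "j = Suc j'" by (cases i; cases j) auto
      have s: "(\<Sum>k<n. cnj (V $$ (Suc k,i)) * V $$ (Suc k,j)) = (adjoint_mat U3 * U3) $$ (i',j')"
        using U3(1) i j ij N_def by (simp add: adjU_U_idx V_def)
      have "(adjoint_mat U3 * U3) $$ (i',j') = (if i' = j' then 1 else 0)" using U3(2) ij i j N_def by simp
      then show ?thesis using s ij i j N_def by (simp add: V_def)
    qed
    finally show "(adjoint_mat V * V) $$ (i,j) = 1\<^sub>m N $$ (i,j)" .
  qed (use V in auto)
  have A'd: "A' = V * dgc N (\<lambda>i. complex_of_real (d i)) * adjoint_mat V"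
  proof (rule eq_matI)
    fix i j assume "i < dim_row (V * dgc N (\<lambda>i. complex_of_real (d i)) * adjoint_mat V)"
       "j < dim_col (V * dgc N (\<lambda>i. complex_of_real (d i)) * adjoint_mat V)"
    then have i: "i < N" and j: "j < N" using V by auto
    have "(V * dgc N (\<lambda>i. complex_of_real (d i)) * adjoint_mat V) $$ (i,j)
       = (\<Sum>k<N. V $$ (i,k) * complex_of_real (d k) * cnj (V $$ (j,k)))"
      by (rule udu_idx[OF V i j])
    also have "\<dots> = V $$ (i,0) * complex_of_real (d 0) * cnj (V $$ (j,0)) + 
        (\<Sum>k<n. V $$ (i,Suc k) * complex_of_real (d (Suc k)) * cnj (V $$ (j,Suc k)))"
      unfolding N_def by (rule sum.lessThan_Suc_shift)
    also have "\<dots> = A' $$ (i,j)"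
    proof (cases "i = 0 \<or> j = 0")
      case True
      then show ?thesis using i j A'col0 A'row0 e_real by (auto simp: V_def N_def d_def)
    next
      case False
      then obtain i' j' where ij: "i = Suc i'" "j = Suc j'" by (cases i; cases j) auto
      have "(\<Sum>k<n. V $$ (i,Suc k) * complex_of_real (d (Suc k)) * cnj (V $$ (j,Suc k)))
          = (U3 * dgc n (\<lambda>i. complex_of_real (d3 i)) * adjoint_mat U3) $$ (i',j')"
        using U3(1) i j ij N_def by (simp add: udu_idx V_def d_def)
      also have "\<dots> = A' $$ (i,j)" using A3d[symmetric] ij i j N_def by (simp add: A3_def)
      finally show ?thesis using ij i j by (simp add: V_def)
    qed
    finally show "A' $$ (i,j) = (V * dgc N (\<lambda>i. complex_of_real (d i)) * adjoint_mat V) $$ (i,j)" by simp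
  qed (use V A' in auto)
  define W where "W = U1 * V"
  have W: "W \<in> carrier_mat N N" using U1 V unfolding W_def by (meson mult_carrier_mat)
  have adjW: "adjoint_mat W = adjoint_mat V * adjoint_mat U1" using U1 V by (simp add: W_def adj_mult)
  have Wu: "adjoint_mat W * W = 1\<^sub>m N"
  proof -
    have aV: "adjoint_mat V \<in> carrier_mat N N" using V by simp
    have "adjoint_mat W * W = adjoint_mat V * adjoint_mat U1 * (U1 * V)"
      unfolding adjW by (simp add: W_def)
    also have "\<dots> = adjoint_mat V * (adjoint_mat U1 * U1 * V)"
      using U1 V aU1 aV by (simp add: assoc3[of _ N] mult_carrier_mat[of _ N N])
    finally show ?thesis using U1u Vu V by simp
  qed
  have "A = U1 * A' * adjoint_mat U1"
  proof -
    have "U1 * A' * adjoint_mat U1 = (U1 * adjoint_mat U1) * A * (U1 * adjoint_mat U1)"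
      using U1 A aU1 by (simp add: A'_def assoc3[of _ N] mult_carrier_mat[of _ N N])
    then show ?thesis using U1u' A by simp
  qed
  also have "\<dots> = W * dgc N (\<lambda>i. complex_of_real (d i)) * adjoint_mat W"
    unfolding adjW using U1 V aU1 by (simp add: A'd W_def assoc3[of _ N] mult_carrier_mat[of _ N N])
  finally show ?case using W Wu unitary_right[OF W Wu] N_def by blast
qed



definition unitaryM :: "nat \<Rightarrow> complex mat \<Rightarrow> bool" where
  "unitaryM n U \<longleftrightarrow> U \<in> carrier_mat n n \<and> adjoint_mat U * U = 1\<^sub>m n \<and> U * adjoint_mat U = 1\<^sub>m n"

definition sp :: "nat \<Rightarrow> complex mat \<Rightarrow> (nat \<Rightarrow> complex) \<Rightarrow> complex mat" where
  "sp n U f = U * dgc n f * adjoint_mat U"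

lemma spectral': assumes "hermitian_mat n A"
  shows "\<exists>U d. unitaryM n U \<and> A = sp n U (\<lambda>i. complex_of_real (d i))"
proof -
  have "A \<in> carrier_mat n n" "adjoint_mat A = A" using assms by (auto simp: hermitian_mat_def)
  from spectral[OF this] obtain U d where "U \<in> carrier_mat n n" "adjoint_mat U * U = 1\<^sub>m n" "U * adjoint_mat U = 1\<^sub>m n"
     "A = U * dgc n (\<lambda>i. complex_of_real (d i)) * adjoint_mat U" by blast
  then show ?thesis unfolding unitaryM_def sp_def by blast
qed

lemma sp_carrier[simp]: "unitaryM n U \<Longrightarrow> sp n U f \<in> carrier_mat n n"
  unfolding sp_def unitaryM_def by (meson adj_carrier dgc_carrier mult_carrier_mat)

lemma sp_dims[simp]: "unitaryM n U \<Longrightarrow> dim_row (sp n U f) = n" "unitaryM n U \<Longrightarrow> dim_col (sp n U f) = n"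
  by (metis carrier_matD sp_carrier)+

lemma sp_idx: "unitaryM n U \<Longrightarrow> i < n \<Longrightarrow> j < n \<Longrightarrow> sp n U f $$ (i,j) = (\<Sum>k<n. U $$ (i,k) * f k * cnj (U $$ (j,k)))"
  unfolding sp_def unitaryM_def by (simp add: udu_idx)

lemma sp_eqI: assumes "unitaryM n U" "A \<in> carrier_mat n n"
  "\<And>i j. i < n \<Longrightarrow> j < n \<Longrightarrow> A $$ (i,j) = (\<Sum>k<n. U $$ (i,k) * f k * cnj (U $$ (j,k)))"
  shows "A = sp n U f"
proof (rule eq_matI)
  fix i j assume "i < dim_row (sp n U f)" "j < dim_col (sp n U f)"
  then have "i < n" "j < n" using assms(1) by auto
  then show "A $$ (i,j) = sp n U f $$ (i,j)" using assms sp_idx[OF assms(1)] by simp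
qed (use assms in auto)

lemma dgc_mult: "dgc n f * dgc n g = dgc n (\<lambda>i. f i * g i)"
  by (rule eq_matI) (auto simp: mult_idx if_distrib sum.delta cong: if_cong)

lemma dgc_one: "dgc n (\<lambda>_. 1) = 1\<^sub>m n"
  by (rule eq_matI) auto

lemma adjU_U_X: assumes "unitaryM n U" "X \<in> carrier_mat n m"
  shows "adjoint_mat U * (U * X) = X"
proof -
  have U: "U \<in> carrier_mat n n" "adjoint_mat U \<in> carrier_mat n n" using assms(1) by (auto simp: unitaryM_def)
  have "adjoint_mat U * (U * X) = (adjoint_mat U * U) * X" using assoc_mult_mat[OF U(2) U(1) assms(2)] by simp
  then show ?thesis using assms by (simp add: unitaryM_def)
qed

lemma sp_mult: assumes "unitaryM n U"
  shows "sp n U f * sp n U g = sp n U (\<lambda>i. f i * g i)"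
proof -
  have U: "U \<in> carrier_mat n n" "adjoint_mat U \<in> carrier_mat n n" using assms(1) by (auto simp: unitaryM_def)
  have "sp n U f * sp n U g = U * (dgc n f * (adjoint_mat U * (U * (dgc n g * adjoint_mat U))))"
    unfolding sp_def using U by (simp add: assoc3[of _ n] mult_carrier_mat[of _ n n])
  also have "\<dots> = U * (dgc n f * (dgc n g * adjoint_mat U))"
    using adjU_U_X[OF assms, of "dgc n g * adjoint_mat U" n] U mult_carrier_mat[OF dgc_carrier U(2)] by simp
  also have "\<dots> = sp n U (\<lambda>i. f i * g i)"
    unfolding sp_def dgc_mult[symmetric] using U by (simp add: assoc3[of _ n] mult_carrier_mat[of _ n n])
  finally show ?thesis .
qed

lemma sp_one: assumes "unitaryM n U" shows "sp n U (\<lambda>_. 1) = 1\<^sub>m n"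
  using assms right_mult_one_mat[of U n n] unfolding sp_def dgc_one unitaryM_def by simp

lemma sp_pow: assumes "unitaryM n U"
  shows "sp n U f ^\<^sub>m k = sp n U (\<lambda>i. f i ^ k)"
proof (induction k)
  case 0
  then show ?case using sp_one[OF assms] sp_carrier[OF assms, of f] by simp
next
  case (Suc k)
  then show ?case by (simp add: sp_mult[OF assms] mult.commute)
qed

lemma exp_series: "(\<lambda>k. z ^ k / of_nat (fact k)) sums (exp (z::complex))"
proof -
  have "(\<lambda>k. z ^ k /\<^sub>R fact k) = (\<lambda>k. z ^ k / of_nat (fact k))"
    by (auto simp: scaleR_conv_of_real divide_inverse mult.commute of_real_inverse[symmetric])
  then show ?thesis using exp_converges[of z] by simp
qed

lemma sp_exp: assumes "unitaryM n U"
  shows "exp_mat (sp n U f) = sp n U (\<lambda>i. exp (f i))"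
proof (rule sp_eqI[OF assms])
  show "exp_mat (sp n U f) \<in> carrier_mat n n" using assms by (simp add: exp_mat_def)
  fix i j assume ij: "i < n" "j < n"
  have "exp_mat (sp n U f) $$ (i,j) = (\<Sum>k. (sp n U f ^\<^sub>m k) $$ (i,j) / of_nat (fact k))"
    using ij assms by (simp add: exp_mat_def)
  also have "\<dots> = (\<Sum>k. \<Sum>l<n. U $$ (i,l) * cnj (U $$ (j,l)) * (f l ^ k / of_nat (fact k)))"
    using ij assms by (simp add: sp_pow sp_idx sum_divide_distrib mult_ac)
  also have "\<dots> = (\<Sum>l<n. U $$ (i,l) * cnj (U $$ (j,l)) * exp (f l))"
    by (rule sums_unique[symmetric], rule sums_sum, rule sums_mult, rule exp_series)
  finally show "exp_mat (sp n U f) $$ (i,j) = (\<Sum>k<n. U $$ (i,k) * exp (f k) * cnj (U $$ (j,k)))"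
    by (simp add: mult_ac)
qed

lemma sp_smult: assumes "unitaryM n U"
  shows "c \<cdot>\<^sub>m sp n U f = sp n U (\<lambda>i. c * f i)"
  by (rule sp_eqI[OF assms]) (use assms in \<open>auto simp: sp_idx sum_distrib_left mult_ac\<close>)

lemma sp_adj: assumes "unitaryM n U"
  shows "adjoint_mat (sp n U f) = sp n U (\<lambda>i. cnj (f i))"
  by (rule sp_eqI[OF assms]) (use assms sp_carrier[OF assms] in \<open>auto simp: sp_idx mult_ac\<close>)

lemma sp_trace: assumes "unitaryM n U"
  shows "trace_mat (sp n U f) = (\<Sum>l<n. f l)"
proof -
  have U: "U \<in> carrier_mat n n" "adjoint_mat U * U = 1\<^sub>m n" using assms by (auto simp: unitaryM_def)
  have "trace_mat (sp n U f) = (\<Sum>i<n. \<Sum>l<n. U $$ (i,l) * f l * cnj (U $$ (i,l)))"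
    using assms by (simp add: trace_mat_def sp_idx)
  also have "\<dots> = (\<Sum>l<n. f l * (\<Sum>i<n. cnj (U $$ (i,l)) * U $$ (i,l)))"
    by (subst sum.swap) (simp add: sum_distrib_left mult_ac)
  also have "\<dots> = (\<Sum>l<n. f l * (adjoint_mat U * U) $$ (l,l))"
    using U(1) by (simp add: adjU_U_idx)
  also have "\<dots> = (\<Sum>l<n. f l)" using U by simp
  finally show ?thesis .
qed



lemma unitaryD: assumes "unitaryM n U"
  shows "U \<in> carrier_mat n n" "adjoint_mat U \<in> carrier_mat n n" "adjoint_mat U * U = 1\<^sub>m n" "U * adjoint_mat U = 1\<^sub>m n"
  using assms by (auto simp: unitaryM_def)

lemma dgc_mv: assumes "w \<in> carrier_vec n" "l < n"
  shows "(dgc n f *\<^sub>v w) $ l = f l * w $ l"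
proof -
  have "(dgc n f *\<^sub>v w) $ l = (\<Sum>k<n. dgc n f $$ (l,k) * w $ k)"
    using assms by (simp add: mult_mat_vec_idx[of _ n n])
  also have "\<dots> = (\<Sum>k<n. (if k = l then f l * w $ l else 0))"
    using assms by (intro sum.cong) auto
  finally show ?thesis using assms by simp
qed

lemma sp_quad: assumes U: "unitaryM n U" and v: "v \<in> carrier_vec n"
  shows "(sp n U f *\<^sub>v v) \<bullet>c v = (\<Sum>l<n. f l * ((adjoint_mat U *\<^sub>v v) $ l * cnj ((adjoint_mat U *\<^sub>v v) $ l)))"
proof -
  note UU = unitaryD[OF U]
  define w where "w = adjoint_mat U *\<^sub>v v"
  have w: "w \<in> carrier_vec n" unfolding w_def by (rule mult_mat_vec_carrier[OF UU(2) v])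
  have Dw: "dgc n f *\<^sub>v w \<in> carrier_vec n" by (rule mult_mat_vec_carrier[OF dgc_carrier w])
  have "sp n U f *\<^sub>v v = U * dgc n f *\<^sub>v w"
    unfolding sp_def w_def using UU v
    by (simp add: assoc_mult_mat_vec[of _ n n _ n] mult_carrier_mat[of _ n n])
  also have "\<dots> = U *\<^sub>v (dgc n f *\<^sub>v w)" by (rule assoc_mult_mat_vec[OF UU(1) dgc_carrier w])
  finally have "sp n U f *\<^sub>v v = U *\<^sub>v (dgc n f *\<^sub>v w)" .
  then have "(sp n U f *\<^sub>v v) \<bullet>c v = (dgc n f *\<^sub>v w) \<bullet>c w"
    using mv_cscalar[OF UU(1) Dw v] w_def by simp
  also have "\<dots> = (\<Sum>l<n. (dgc n f *\<^sub>v w) $ l * cnj (w $ l))" by (rule cscalar_sum[OF Dw w])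
  also have "\<dots> = (\<Sum>l<n. f l * (w $ l * cnj (w $ l)))"
    using w by (intro sum.cong) (auto simp: dgc_mv mult_ac)
  finally show ?thesis by (simp add: w_def)
qed

lemma sp_col: assumes U: "unitaryM n U" and l: "l < n"
  shows "col U l \<in> carrier_vec n" "sp n U f *\<^sub>v col U l = f l \<cdot>\<^sub>v col U l" "col U l \<bullet>c col U l = 1"
proof -
  have U1: "U \<in> carrier_mat n n" and U3: "adjoint_mat U * U = 1\<^sub>m n" using U by (auto simp: unitaryM_def)
  have dr: "dim_row U = n" "dim_col U = n" using U1 by auto
  have aUU: "(\<Sum>k<n. cnj (U $$ (k,m)) * U $$ (k,l)) = (if m = l then 1 else 0)" if m: "m < n" for m
  proof -
    have "(\<Sum>k<n. cnj (U $$ (k,m)) * U $$ (k,l)) = (adjoint_mat U * U) $$ (m,l)"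
      by (rule adjU_U_idx[OF U1 m l, symmetric])
    also have "\<dots> = (if m = l then 1 else 0)" unfolding U3 using m l by simp
    finally show ?thesis .
  qed
  show c: "col U l \<in> carrier_vec n" using col_carrier_vec[OF l U1] .
  have cidx: "col U l $ k = U $$ (k,l)" if "k < n" for k using that l by (metis dr index_col)
  show "sp n U f *\<^sub>v col U l = f l \<cdot>\<^sub>v col U l"
  proof (rule eq_vecI)
    fix i assume "i < dim_vec (f l \<cdot>\<^sub>v col U l)"
    then have i: "i < n" using dr by simp
    have "(sp n U f *\<^sub>v col U l) $ i = (\<Sum>k<n. sp n U f $$ (i,k) * col U l $ k)"
      by (rule mult_mat_vec_idx[OF sp_carrier[OF U] c i])
    also have "\<dots> = (\<Sum>k<n. (\<Sum>m<n. U $$ (i,m) * f m * cnj (U $$ (k,m))) * U $$ (k,l))"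
      by (intro sum.cong refl) (simp add: sp_idx[OF U i] cidx)
    also have "\<dots> = (\<Sum>k<n. \<Sum>m<n. U $$ (i,m) * f m * (cnj (U $$ (k,m)) * U $$ (k,l)))"
      by (simp only: sum_distrib_right mult.assoc)
    also have "\<dots> = (\<Sum>m<n. \<Sum>k<n. U $$ (i,m) * f m * (cnj (U $$ (k,m)) * U $$ (k,l)))"
      by (rule sum.swap)
    also have "\<dots> = (\<Sum>m<n. U $$ (i,m) * f m * (\<Sum>k<n. cnj (U $$ (k,m)) * U $$ (k,l)))"
      by (simp only: sum_distrib_left)
    also have "\<dots> = (\<Sum>m<n. (if m = l then U $$ (i,l) * f l else 0))"
      by (intro sum.cong refl) (simp add: aUU)
    also have "\<dots> = U $$ (i,l) * f l" using l by simp
    finally show "(sp n U f *\<^sub>v col U l) $ i = (f l \<cdot>\<^sub>v col U l) $ i" using i l dr by simp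
  qed (use U dr in simp)
  have "col U l \<bullet>c col U l = (\<Sum>k<n. col U l $ k * cnj (col U l $ k))" by (rule cscalar_sum[OF c c])
  also have "\<dots> = (\<Sum>k<n. cnj (U $$ (k,l)) * U $$ (k,l))" by (intro sum.cong refl) (simp add: cidx mult.commute)
  also have "\<dots> = 1" using aUU[OF l] by simp
  finally show "col U l \<bullet>c col U l = 1" .
qed

lemma psd_sp: assumes U: "unitaryM n U"
  shows "psd_mat n (sp n U (\<lambda>i. complex_of_real (d i))) \<longleftrightarrow> (\<forall>l<n. 0 \<le> d l)"
proof
  assume psd: "psd_mat n (sp n U (\<lambda>i. complex_of_real (d i)))"
  show "\<forall>l<n. 0 \<le> d l"
  proof (intro allI impI)
    fix l assume l: "l < n"
    note c = sp_col(1)[OF U l] sp_col(2)[OF U l, of "\<lambda>i. complex_of_real (d i)"] sp_col(3)[OF U l]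
    have "0 \<le> Re ((sp n U (\<lambda>i. complex_of_real (d i)) *\<^sub>v col U l) \<bullet>c col U l)"
      using psd c(1) by (simp add: psd_mat_def)
    also have "(sp n U (\<lambda>i. complex_of_real (d i)) *\<^sub>v col U l) \<bullet>c col U l = complex_of_real (d l)"
      using c by (simp add: cscalar_smult_l[of _ n])
    finally show "0 \<le> d l" by simp
  qed
next
  assume d: "\<forall>l<n. 0 \<le> d l"
  have herm: "hermitian_mat n (sp n U (\<lambda>i. complex_of_real (d i)))"
    using U by (simp add: hermitian_mat_def sp_adj)
  show "psd_mat n (sp n U (\<lambda>i. complex_of_real (d i)))"
    unfolding psd_mat_def
  proof (intro conjI herm ballI)
    fix v :: "complex vec" assume v: "v \<in> carrier_vec n"
    have "Re ((sp n U (\<lambda>i. complex_of_real (d i)) *\<^sub>v v) \<bullet>c v)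
       = (\<Sum>l<n. d l * ((Re ((adjoint_mat U *\<^sub>v v) $ l))\<^sup>2 + (Im ((adjoint_mat U *\<^sub>v v) $ l))\<^sup>2))"
      using sp_quad[OF U v] by (simp add: complex_mult_cnj)
    also have "\<dots> \<ge> 0" using d by (intro sum_nonneg) simp
    finally show "0 \<le> Re ((sp n U (\<lambda>i. complex_of_real (d i)) *\<^sub>v v) \<bullet>c v)" .
  qed
qed



lemma adjU_sp: assumes U: "unitaryM n U"
  shows "adjoint_mat U * sp n U f = dgc n f * adjoint_mat U"
proof -
  note UU = unitaryD[OF U]
  have "adjoint_mat U * sp n U f = adjoint_mat U * (U * (dgc n f * adjoint_mat U))"
    unfolding sp_def using UU(1,2) by (simp add: assoc3[of _ n])
  also have "\<dots> = dgc n f * adjoint_mat U"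
    by (rule adjU_U_X[OF U mult_carrier_mat[OF dgc_carrier UU(2)]])
  finally show ?thesis .
qed

lemma vec_nonzero_idx: assumes "w \<in> carrier_vec n" "w \<noteq> 0\<^sub>v n" shows "\<exists>l<n. w $ l \<noteq> 0"
proof (rule ccontr)
  assume "\<not> (\<exists>l<n. w $ l \<noteq> 0)"
  then have "w = 0\<^sub>v n" using assms(1) by (intro eq_vecI) auto
  then show False using assms(2) by simp
qed

lemma eig_set: assumes U: "unitaryM n U"
  shows "{r. eigenvalue (sp n U (\<lambda>i. complex_of_real (d i))) (complex_of_real r)} = d ` {..<n}"
proof
  let ?f = "\<lambda>i. complex_of_real (d i)"
  let ?M = "sp n U ?f"
  note UU = unitaryD[OF U]
  show "d ` {..<n} \<subseteq> {r. eigenvalue ?M (complex_of_real r)}"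
  proof
    fix r assume "r \<in> d ` {..<n}"
    then obtain l where l: "l < n" and r: "r = d l" by auto
    note c = sp_col(1)[OF U l] sp_col(2)[OF U l, of ?f] sp_col(3)[OF U l]
    have "col U l \<noteq> 0\<^sub>v n" using c(3) by auto
    then have "eigenvector ?M (col U l) (complex_of_real r)"
      unfolding eigenvector_def using c U r by simp
    then show "r \<in> {r. eigenvalue ?M (complex_of_real r)}" by (auto simp: eigenvalue_def)
  qed
  show "{r. eigenvalue ?M (complex_of_real r)} \<subseteq> d ` {..<n}"
  proof
    fix r assume "r \<in> {r. eigenvalue ?M (complex_of_real r)}"
    then obtain x where "eigenvector ?M x (complex_of_real r)" by (auto simp: eigenvalue_def)
    then have x: "x \<in> carrier_vec n" "x \<noteq> 0\<^sub>v n" and Mx: "?M *\<^sub>v x = complex_of_real r \<cdot>\<^sub>v x"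
      using U by (auto simp: eigenvector_def)
    define w where "w = adjoint_mat U *\<^sub>v x"
    have w: "w \<in> carrier_vec n" unfolding w_def by (rule mult_mat_vec_carrier[OF UU(2) x(1)])
    have "U *\<^sub>v w = x" unfolding w_def using UU x
      by (simp add: assoc_mult_mat_vec[symmetric, of _ n n _ n])
    moreover have "U *\<^sub>v 0\<^sub>v n = 0\<^sub>v n" using UU(1) by (intro eq_vecI) (auto simp: mult_mat_vec_idx[of _ n n])
    ultimately have w0: "w \<noteq> 0\<^sub>v n" using x by auto
    obtain l where l: "l < n" and wl: "w $ l \<noteq> 0" using vec_nonzero_idx[OF w w0] by blast
    have "adjoint_mat U *\<^sub>v (?M *\<^sub>v x) = (adjoint_mat U * ?M) *\<^sub>v x"
      by (rule assoc_mult_mat_vec[OF UU(2) sp_carrier[OF U] x(1), symmetric])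
    also have "\<dots> = (dgc n ?f * adjoint_mat U) *\<^sub>v x" by (simp add: adjU_sp[OF U])
    also have "\<dots> = dgc n ?f *\<^sub>v w" unfolding w_def using UU x by (simp add: assoc_mult_mat_vec[of _ n n _ n])
    finally have e1: "adjoint_mat U *\<^sub>v (?M *\<^sub>v x) = dgc n ?f *\<^sub>v w" .
    have e2: "adjoint_mat U *\<^sub>v (?M *\<^sub>v x) = complex_of_real r \<cdot>\<^sub>v w"
      unfolding Mx w_def by (rule mult_mat_vec[OF UU(2) x(1)])
    have "?f l * w $ l = complex_of_real r * w $ l"
      using arg_cong[OF trans[OF e1[symmetric] e2], of "\<lambda>v. v $ l"] dgc_mv[OF w l] l w by simp
    then have "d l = r" using wl by simp
    then show "r \<in> d ` {..<n}" using l by auto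
  qed
qed

lemma min_eig_sp: assumes U: "unitaryM n U" and n: "0 < n"
  shows "min_eigenvalue (sp n U (\<lambda>i. complex_of_real (d i))) = Min (d ` {..<n})"
  unfolding min_eigenvalue_def eig_set[OF U] ..

lemma psd_congr: assumes R: "R \<in> carrier_mat n n" "adjoint_mat R = R" and X: "psd_mat n X"
  shows "psd_mat n (R * X * R)"
proof -
  have Xc: "X \<in> carrier_mat n n" "adjoint_mat X = X" using X by (auto simp: psd_mat_def hermitian_mat_def)
  have herm: "hermitian_mat n (R * X * R)"
    unfolding hermitian_mat_def using R Xc
    by (simp add: adj_mult assoc3[of _ n] mult_carrier_mat[of _ n n])
  show ?thesis unfolding psd_mat_def
  proof (intro conjI herm ballI)
    fix v :: "complex vec" assume v: "v \<in> carrier_vec n"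
    have Rv: "R *\<^sub>v v \<in> carrier_vec n" by (rule mult_mat_vec_carrier[OF R(1) v])
    have XRv: "X *\<^sub>v (R *\<^sub>v v) \<in> carrier_vec n" by (rule mult_mat_vec_carrier[OF Xc(1) Rv])
    have "R * X * R *\<^sub>v v = R *\<^sub>v (X *\<^sub>v (R *\<^sub>v v))"
      using R Xc v by (simp add: assoc_mult_mat_vec[of _ n n _ n] mult_carrier_mat[of _ n n])
    then have "(R * X * R *\<^sub>v v) \<bullet>c v = (X *\<^sub>v (R *\<^sub>v v)) \<bullet>c (R *\<^sub>v v)"
      using mv_cscalar[OF R(1) XRv v] R(2) by simp
    then show "0 \<le> Re ((R * X * R *\<^sub>v v) \<bullet>c v)" using X Rv by (simp add: psd_mat_def)
  qed
qed

lemma psd_smult: assumes c: "0 \<le> c" and X: "psd_mat n X"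
  shows "psd_mat n (complex_of_real c \<cdot>\<^sub>m X)"
proof -
  have Xc: "X \<in> carrier_mat n n" "adjoint_mat X = X" using X by (auto simp: psd_mat_def hermitian_mat_def)
  have herm: "hermitian_mat n (complex_of_real c \<cdot>\<^sub>m X)"
    unfolding hermitian_mat_def using Xc by (simp add: adj_smult)
  show ?thesis unfolding psd_mat_def
  proof (intro conjI herm ballI)
    fix v :: "complex vec" assume v: "v \<in> carrier_vec n"
    have Xv: "X *\<^sub>v v \<in> carrier_vec n" by (rule mult_mat_vec_carrier[OF Xc(1) v])
    have "(complex_of_real c \<cdot>\<^sub>m X) *\<^sub>v v = complex_of_real c \<cdot>\<^sub>v (X *\<^sub>v v)"
      using Xc v by (intro eq_vecI) (auto simp: mult_mat_vec_idx[of _ n n] sum_distrib_left mult.assoc)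
    then have "((complex_of_real c \<cdot>\<^sub>m X) *\<^sub>v v) \<bullet>c v = complex_of_real c * ((X *\<^sub>v v) \<bullet>c v)"
      using cscalar_smult_l[OF Xv v] by simp
    moreover have "0 \<le> Re ((X *\<^sub>v v) \<bullet>c v)" using X v by (simp add: psd_mat_def)
    ultimately show "0 \<le> Re (((complex_of_real c \<cdot>\<^sub>m X) *\<^sub>v v) \<bullet>c v)" using c by simp
  qed
qed

lemma trace_minus: "A \<in> carrier_mat n n \<Longrightarrow> B \<in> carrier_mat n n \<Longrightarrow> trace_mat (A - B) = trace_mat A - trace_mat B"
  by (simp add: trace_mat_def sum_subtractf)

lemma trace_smult: "A \<in> carrier_mat n n \<Longrightarrow> trace_mat (c \<cdot>\<^sub>m A) = c * trace_mat A"
  unfolding trace_mat_def sum_distrib_left by (intro sum.cong) auto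

lemma psd_trace: assumes X: "psd_mat n X"
  shows "trace_mat X = complex_of_real (Re (trace_mat X))" "0 \<le> Re (trace_mat X)"
    "trace_mat X = 0 \<Longrightarrow> X = 0\<^sub>m n n"
proof -
  have "hermitian_mat n X" using X by (simp add: psd_mat_def)
  from spectral'[OF this] obtain U d where U: "unitaryM n U" and Xd: "X = sp n U (\<lambda>i. complex_of_real (d i))" by blast
  have d: "\<forall>l<n. 0 \<le> d l" using X psd_sp[OF U] Xd by simp
  have tr: "trace_mat X = complex_of_real (\<Sum>l<n. d l)" using sp_trace[OF U] Xd by simp
  show "trace_mat X = complex_of_real (Re (trace_mat X))" using tr by simp
  have "0 \<le> (\<Sum>l<n. d l)" using d by (intro sum_nonneg) auto
  then show "0 \<le> Re (trace_mat X)" using tr by simp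
  assume "trace_mat X = 0"
  then have "(\<Sum>l<n. d l) = 0" using tr by (metis of_real_eq_0_iff)
  then have "\<forall>l\<in>{..<n}. d l = 0" using d by (subst sum_nonneg_eq_0_iff[symmetric]) auto
  then show "X = 0\<^sub>m n n" unfolding Xd using U by (intro eq_matI) (auto simp: sp_idx)
qed



lemma sp_cong: assumes U: "unitaryM n U" and "\<And>i. i < n \<Longrightarrow> f i = g i"
  shows "sp n U f = sp n U g"
  by (rule sp_eqI[OF U sp_carrier[OF U]]) (use assms in \<open>simp add: sp_idx\<close>)

lemma sp_minus: assumes U: "unitaryM n U"
  shows "sp n U f - sp n U g = sp n U (\<lambda>i. f i - g i)"
proof (rule sp_eqI[OF U])
  show "sp n U f - sp n U g \<in> carrier_mat n n" using sp_carrier[OF U] by (meson minus_carrier_mat)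
  fix i j assume ij: "i < n" "j < n"
  then show "(sp n U f - sp n U g) $$ (i,j) = (\<Sum>k<n. U $$ (i,k) * (f k - g k) * cnj (U $$ (j,k)))"
    using U by (simp add: sp_idx sum_subtractf[symmetric] algebra_simps)
qed

lemma gibbs_sp: assumes H: "hermitian_mat n H" and n: "0 < n"
  shows "\<exists>U g. unitaryM n U \<and> (\<forall>l. 0 < g l) \<and> (\<Sum>l<n. g l) = 1 \<and>
           gibbs_state \<beta> H = sp n U (\<lambda>i. complex_of_real (g i))"
proof -
  from spectral'[OF H] obtain U h where U: "unitaryM n U" and Hh: "H = sp n U (\<lambda>i. complex_of_real (h i))" by blast
  define e where "e i = exp (- \<beta> * h i)" for i
  have epos: "0 < e i" for i by (simp add: e_def)
  have "(- complex_of_real \<beta>) \<cdot>\<^sub>m H = sp n U (\<lambda>i. (- complex_of_real \<beta>) * complex_of_real (h i))"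
    unfolding Hh by (rule sp_smult[OF U])
  then have E: "exp_mat ((- complex_of_real \<beta>) \<cdot>\<^sub>m H) = sp n U (\<lambda>i. complex_of_real (e i))"
    by (simp add: sp_exp[OF U] e_def exp_of_real[symmetric])
  define Z where "Z = (\<Sum>l<n. e l)"
  have Zpos: "0 < Z" unfolding Z_def using n epos by (intro sum_pos) auto
  have tr: "trace_mat (exp_mat ((- complex_of_real \<beta>) \<cdot>\<^sub>m H)) = complex_of_real Z"
    unfolding E sp_trace[OF U] Z_def by simp
  have tr': "trace_mat (sp n U (\<lambda>i. complex_of_real (e i))) = complex_of_real Z" using tr E by simp
  define g where "g i = e i / Z" for i
  have "gibbs_state \<beta> H = sp n U (\<lambda>i. (1 / complex_of_real Z) * complex_of_real (e i))"
    unfolding gibbs_state_def E tr' by (rule sp_smult[OF U])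
  also have "\<dots> = sp n U (\<lambda>i. complex_of_real (g i))" by (simp add: g_def)
  finally have G: "gibbs_state \<beta> H = sp n U (\<lambda>i. complex_of_real (g i))" .
  have "(\<Sum>l<n. g l) = 1" unfolding g_def sum_divide_distrib[symmetric] Z_def[symmetric] using Zpos by simp
  moreover have "\<forall>l. 0 < g l" using epos Zpos by (simp add: g_def)
  ultimately show ?thesis using U G by blast
qed

lemma inverse_sp: assumes U: "unitaryM n U" and g: "\<forall>l. 0 < g l"
  shows "inverse_mat n (sp n U (\<lambda>i. complex_of_real (g i))) = sp n U (\<lambda>i. complex_of_real (1 / g i))"
proof -
  let ?G = "sp n U (\<lambda>i. complex_of_real (g i))"
  have gnz: "g i \<noteq> 0" for i using g by (metis less_irrefl)
  let ?B = "sp n U (\<lambda>i. complex_of_real (1 / g i))"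
  have GB: "?G * ?B = 1\<^sub>m n" using gnz sp_one[OF U] by (simp add: sp_mult[OF U])
  have BG: "?B * ?G = 1\<^sub>m n" using gnz sp_one[OF U] by (simp add: sp_mult[OF U])
  show ?thesis unfolding inverse_mat_def
  proof (rule the_equality)
    show "?B \<in> carrier_mat n n \<and> ?G * ?B = 1\<^sub>m n \<and> ?B * ?G = 1\<^sub>m n" using GB BG U by simp
    fix C assume C: "C \<in> carrier_mat n n \<and> ?G * C = 1\<^sub>m n \<and> C * ?G = 1\<^sub>m n"
    have "C = C * (?G * ?B)" unfolding GB using C right_mult_one_mat[of C n n] by simp
    also have "\<dots> = (C * ?G) * ?B" by (rule assoc3[symmetric]) (use C U in auto)
    also have "\<dots> = 1\<^sub>m n * ?B" using C by (simp only:)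
    also have "\<dots> = ?B" by (rule left_mult_one_mat[OF sp_carrier[OF U]])
    finally show "C = ?B" .
  qed
qed

lemma sqrt_unique: assumes U: "unitaryM n U" and s: "\<forall>l. 0 < s l"
  and T: "psd_mat n T" and TT: "T * T = sp n U (\<lambda>i. complex_of_real (s i ^ 2))"
  shows "T = sp n U (\<lambda>i. complex_of_real (s i))"
proof -
  note UU = unitaryD[OF U]
  have Tc: "T \<in> carrier_mat n n" using T by (simp add: psd_mat_def hermitian_mat_def)
  have ev: "T *\<^sub>v col U l = complex_of_real (s l) \<cdot>\<^sub>v col U l" if l: "l < n" for l
  proof -
    define u where "u = col U l"
    define c where "c = complex_of_real (s l)"
    have u: "u \<in> carrier_vec n" unfolding u_def by (rule sp_col(1)[OF U l])
    have Tu: "T *\<^sub>v u \<in> carrier_vec n" by (rule mult_mat_vec_carrier[OF Tc u])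
    have TTu: "T *\<^sub>v (T *\<^sub>v u) = (c * c) \<cdot>\<^sub>v u"
    proof -
      have "T *\<^sub>v (T *\<^sub>v u) = (T * T) *\<^sub>v u" by (rule assoc_mult_mat_vec[OF Tc Tc u, symmetric])
      also have "\<dots> = complex_of_real (s l ^ 2) \<cdot>\<^sub>v u" unfolding TT u_def by (rule sp_col(2)[OF U l])
      finally show ?thesis by (simp add: c_def power2_eq_square)
    qed
    define y where "y = T *\<^sub>v u - c \<cdot>\<^sub>v u"
    have y: "y \<in> carrier_vec n" using Tu u by (simp add: y_def)
    have Ty: "T *\<^sub>v y = (- c) \<cdot>\<^sub>v y"
    proof (rule eq_vecI)
      fix i assume "i < dim_vec ((- c) \<cdot>\<^sub>v y)"
      then have i: "i < n" using y by simp
      have "T *\<^sub>v y = T *\<^sub>v (T *\<^sub>v u) - T *\<^sub>v (c \<cdot>\<^sub>v u)"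
        unfolding y_def by (rule mult_minus_distrib_mat_vec[OF Tc Tu smult_carrier_vec[THEN iffD2, OF u]])
      also have "\<dots> = (c * c) \<cdot>\<^sub>v u - c \<cdot>\<^sub>v (T *\<^sub>v u)" unfolding TTu mult_mat_vec[OF Tc u] ..
      finally have "(T *\<^sub>v y) $ i = ((c * c) \<cdot>\<^sub>v u - c \<cdot>\<^sub>v (T *\<^sub>v u)) $ i" by simp
      also have "\<dots> = ((- c) \<cdot>\<^sub>v y) $ i"
      proof -
        have d: "dim_vec u = n" "dim_vec (T *\<^sub>v u) = n" using u Tu by (metis carrier_vecD)+
        show ?thesis using i d by (simp add: y_def algebra_simps)
      qed
      finally show "(T *\<^sub>v y) $ i = ((- c) \<cdot>\<^sub>v y) $ i" .
    qed (use y Tc in simp)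
    have "0 \<le> Re ((T *\<^sub>v y) \<bullet>c y)" using T y by (simp add: psd_mat_def)
    also have "(T *\<^sub>v y) \<bullet>c y = (- c) * (y \<bullet>c y)" unfolding Ty by (rule cscalar_smult_l[OF y y])
    finally have "0 \<le> - s l * Re (y \<bullet>c y)" by (simp add: c_def)
    then have "Re (y \<bullet>c y) \<le> 0" using s[rule_format, of l] mult_pos_pos[of "s l" "Re (y \<bullet>c y)"] by linarith
    then have "y \<bullet>c y = 0" using self_cscalar_real[OF y] by (metis antisym of_real_0)
    then have "y = 0\<^sub>v n" using y by simp
    then have y0: "y $ i = 0" if "i < n" for i using that by simp
    have d: "dim_vec u = n" "dim_vec (T *\<^sub>v u) = n" using u Tu by (metis carrier_vecD)+
    have "T *\<^sub>v u = c \<cdot>\<^sub>v u"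
    proof (rule eq_vecI)
      fix i assume "i < dim_vec (c \<cdot>\<^sub>v u)"
      then have i: "i < n" using d by simp
      show "(T *\<^sub>v u) $ i = (c \<cdot>\<^sub>v u) $ i" using y0[OF i] i d by (simp add: y_def)
    qed (use d in simp)
    then show ?thesis by (simp add: u_def c_def)
  qed
  have TU: "T * U = U * dgc n (\<lambda>i. complex_of_real (s i))"
  proof (rule eq_matI)
    fix i l assume "i < dim_row (U * dgc n (\<lambda>i. complex_of_real (s i)))" "l < dim_col (U * dgc n (\<lambda>i. complex_of_real (s i)))"
    then have i: "i < n" and l: "l < n" using UU by auto
    have "(T * U) $$ (i,l) = (T *\<^sub>v col U l) $ i" using Tc UU i l by (simp add: index_mult_mat(1) index_mult_mat_vec)
    also have "\<dots> = complex_of_real (s l) * U $$ (i,l)" using ev[OF l] i l UU by simp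
    also have "\<dots> = (U * dgc n (\<lambda>i. complex_of_real (s i))) $$ (i,l)"
    proof -
      have "(U * dgc n (\<lambda>i. complex_of_real (s i))) $$ (i,l) = (\<Sum>k<n. U $$ (i,k) * dgc n (\<lambda>i. complex_of_real (s i)) $$ (k,l))"
        using UU i l by (subst mult_idx) auto
      also have "\<dots> = (\<Sum>k<n. if k = l then U $$ (i,l) * complex_of_real (s l) else 0)"
        using l by (intro sum.cong) auto
      finally show ?thesis using l by simp
    qed
    finally show "(T * U) $$ (i,l) = (U * dgc n (\<lambda>i. complex_of_real (s i))) $$ (i,l)" .
  qed (use Tc UU in auto)
  have "T = T * (U * adjoint_mat U)" using UU Tc by simp
  also have "\<dots> = (T * U) * adjoint_mat U" using UU Tc by (simp add: assoc3[of _ n])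
  also have "\<dots> = sp n U (\<lambda>i. complex_of_real (s i))" unfolding TU sp_def ..
  finally show ?thesis .
qed



theorem mainTheorem1:
  fixes n :: nat and H \<rho> :: "complex mat" and \<beta> :: real
  assumes "0 < n"
    and "hermitian_mat n H"
    and "\<beta> \<noteq> 0"
    and "density_mat n \<rho>"
  defines "\<gamma> \<equiv> gibbs_state \<beta> H"
  defines "a \<equiv> 1 - min_eigenvalue
             (psd_sqrt n (inverse_mat n \<gamma>) * \<rho> * psd_sqrt n (inverse_mat n \<gamma>))"
  shows "a \<in> athermality_set n \<gamma> \<rho> \<and> (\<forall>b \<in> athermality_set n \<gamma> \<rho>. a \<le> b)
       \<and> weight_of_athermality n \<beta> H \<rho> = a
       \<and> 0 \<le> a \<and> a \<le> 1
       \<and> (a = 0 \<longleftrightarrow> \<rho> = \<gamma>)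
       \<and> (\<rho> \<noteq> \<gamma> \<longrightarrow>
            (\<forall>\<tau>. (density_mat n \<tau> \<and>
                   \<rho> = complex_of_real (1 - a) \<cdot>\<^sub>m \<gamma> + complex_of_real a \<cdot>\<^sub>m \<tau>)
                 \<longleftrightarrow> \<tau> = complex_of_real (1 / a) \<cdot>\<^sub>m (\<rho> - complex_of_real (1 - a) \<cdot>\<^sub>m \<gamma>)))"
proof -
  note n = assms(1)
  have rho_psd: "psd_mat n \<rho>" and rho_tr: "trace_mat \<rho> = 1" using assms(4) by (auto simp: density_mat_def)
  have rho_c: "\<rho> \<in> carrier_mat n n" using rho_psd by (simp add: psd_mat_def hermitian_mat_def)
  obtain U g where U: "unitaryM n U" and gpos: "\<forall>l. 0 < g l" and gsum: "(\<Sum>l<n. g l) = 1"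
    and G: "gibbs_state \<beta> H = sp n U (\<lambda>i. complex_of_real (g i))"
    using gibbs_sp[OF assms(2) n, of \<beta>] by blast
  have gam: "\<gamma> = sp n U (\<lambda>i. complex_of_real (g i))" unfolding \<gamma>_def G ..
  have gam_c: "\<gamma> \<in> carrier_mat n n" using U by (simp add: gam)
  have gnz: "g i \<noteq> 0" for i using gpos by (metis less_irrefl)
  have gsq: "sqrt (g i) \<noteq> 0" for i using gnz by simp
  define S where "S = sp n U (\<lambda>i. complex_of_real (1 / sqrt (g i)))"
  define R where "R = sp n U (\<lambda>i. complex_of_real (sqrt (g i)))"
  have S_c: "S \<in> carrier_mat n n" and R_c: "R \<in> carrier_mat n n" using U by (simp_all add: S_def R_def)
  have S_h: "adjoint_mat S = S" and R_h: "adjoint_mat R = R" by (simp_all add: S_def R_def sp_adj[OF U])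
  have RS: "R * S = 1\<^sub>m n" unfolding R_def S_def sp_mult[OF U] using gsq sp_one[OF U] by simp
  have SR: "S * R = 1\<^sub>m n" unfolding R_def S_def sp_mult[OF U] using gsq sp_one[OF U] by simp
  have ff1: "(\<lambda>i. complex_of_real (sqrt (g i)) * complex_of_real (sqrt (g i))) = (\<lambda>i. complex_of_real (g i))"
  proof (rule ext)
    fix i
    have "sqrt (g i) * sqrt (g i) = g i" using gpos by (simp add: less_imp_le)
    then show "complex_of_real (sqrt (g i)) * complex_of_real (sqrt (g i)) = complex_of_real (g i)"
      by (metis of_real_mult)
  qed
  have ff2: "(\<lambda>i. complex_of_real (1 / sqrt (g i)) * complex_of_real (1 / sqrt (g i))) = (\<lambda>i. complex_of_real (1 / g i))"
  proof (rule ext)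
    fix i
    have "(1 / sqrt (g i)) * (1 / sqrt (g i)) = 1 / g i" using gpos by (simp add: less_imp_le)
    then show "complex_of_real (1 / sqrt (g i)) * complex_of_real (1 / sqrt (g i)) = complex_of_real (1 / g i)"
      by (metis of_real_mult)
  qed
  have RR: "R * R = \<gamma>" unfolding R_def gam sp_mult[OF U] ff1 ..
  have inv: "inverse_mat n \<gamma> = sp n U (\<lambda>i. complex_of_real (1 / g i))"
    unfolding gam by (rule inverse_sp[OF U gpos])
  have sq: "psd_sqrt n (inverse_mat n \<gamma>) = S"
    unfolding inv psd_sqrt_def
  proof (rule the_equality)
    have "psd_mat n S" unfolding S_def psd_sp[OF U] using gpos by (simp add: less_imp_le)
    moreover have "S * S = sp n U (\<lambda>i. complex_of_real (1 / g i))"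
      unfolding S_def sp_mult[OF U] ff2 ..
    ultimately show "psd_mat n S \<and> S * S = sp n U (\<lambda>i. complex_of_real (1 / g i))" by blast
    fix T assume T: "psd_mat n T \<and> T * T = sp n U (\<lambda>i. complex_of_real (1 / g i))"
    have ee: "(1 / sqrt (g i))^2 = 1 / g i" for i
    proof -
      have "(1 / sqrt (g i))^2 = (1 / sqrt (g i)) * (1 / sqrt (g i))" by (rule power2_eq_square)
      also have "\<dots> = 1 / g i" using gpos by (simp add: less_imp_le)
      finally show ?thesis .
    qed
    have TT: "T * T = sp n U (\<lambda>i. complex_of_real ((1 / sqrt (g i))^2))" unfolding ee using T by blast
    have s_pos: "\<forall>l. 0 < 1 / sqrt (g l)" using gpos by simp
    have Tp: "psd_mat n T" using T by blast
    show "T = S" unfolding S_def by (rule sqrt_unique[OF U s_pos Tp TT])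
  qed
  define M where "M = S * \<rho> * S"
  have a: "a = 1 - min_eigenvalue M" unfolding a_def sq M_def ..
  have M_psd: "psd_mat n M" unfolding M_def by (rule psd_congr[OF S_c S_h rho_psd])
  then have "hermitian_mat n M" by (simp add: psd_mat_def)
  from spectral'[OF this] obtain V m where V: "unitaryM n V" and Mm: "M = sp n V (\<lambda>i. complex_of_real (m i))" by blast
  define \<mu> where "\<mu> = Min (m ` {..<n})"
  have mu: "min_eigenvalue M = \<mu>" unfolding Mm \<mu>_def by (rule min_eig_sp[OF V n])
  have a_mu: "a = 1 - \<mu>" using a mu by simp
  have M_c: "M \<in> carrier_mat n n" using V by (simp add: Mm)
  have fin: "finite (m ` {..<n})" "m ` {..<n} \<noteq> {}" using n by auto
  have K: "psd_mat n (\<rho> - complex_of_real c \<cdot>\<^sub>m \<gamma>) \<longleftrightarrow> c \<le> \<mu>" for c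
  proof -
    define X where "X = M - complex_of_real c \<cdot>\<^sub>m 1\<^sub>m n"
    have X_c: "X \<in> carrier_mat n n" unfolding X_def using M_c by (meson minus_carrier_mat smult_carrier_mat one_carrier_mat)
    have "X = sp n V (\<lambda>i. complex_of_real (m i)) - sp n V (\<lambda>i. complex_of_real c * 1)"
      unfolding X_def Mm sp_one[OF V, symmetric] sp_smult[OF V] ..
    also have "\<dots> = sp n V (\<lambda>i. complex_of_real (m i - c))" unfolding sp_minus[OF V] by simp
    finally have Xm: "X = sp n V (\<lambda>i. complex_of_real (m i - c))" .
    have psdX: "psd_mat n X \<longleftrightarrow> c \<le> \<mu>"
      unfolding Xm psd_sp[OF V] \<mu>_def using fin by (auto simp: Min_ge_iff)
    have RXR: "R * X * R = \<rho> - complex_of_real c \<cdot>\<^sub>m \<gamma>"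
    proof -
      have "R * X = R * M - R * (complex_of_real c \<cdot>\<^sub>m 1\<^sub>m n)"
        unfolding X_def by (rule mult_minus_distrib_mat[OF R_c M_c]) simp
      also have "R * (complex_of_real c \<cdot>\<^sub>m 1\<^sub>m n) = complex_of_real c \<cdot>\<^sub>m R"
        using R_c by (simp add: mult_smult_distrib[OF R_c one_carrier_mat] right_mult_one_mat[OF R_c])
      finally have "R * X * R = (R * M - complex_of_real c \<cdot>\<^sub>m R) * R" by simp
      also have "\<dots> = R * M * R - (complex_of_real c \<cdot>\<^sub>m R) * R"
        by (rule minus_mult_distrib_mat) (use R_c M_c in auto)
      also have "(complex_of_real c \<cdot>\<^sub>m R) * R = complex_of_real c \<cdot>\<^sub>m \<gamma>"
        using mult_smult_assoc_mat[OF R_c R_c] RR by simp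
      also have "R * M * R = (R * S) * \<rho> * (S * R)"
        unfolding M_def using R_c S_c rho_c by (simp add: assoc3[of _ n] mult_carrier_mat[of _ n n])
      also have "\<dots> = \<rho>" unfolding RS SR using rho_c by simp
      finally show ?thesis .
    qed
    have SYS: "S * (\<rho> - complex_of_real c \<cdot>\<^sub>m \<gamma>) * S = X"
    proof -
      have "S * (\<rho> - complex_of_real c \<cdot>\<^sub>m \<gamma>) * S = (S * R) * X * (R * S)"
        unfolding RXR[symmetric] using R_c S_c X_c by (simp add: assoc3[of _ n] mult_carrier_mat[of _ n n])
      also have "\<dots> = X" unfolding RS SR using X_c by simp
      finally show ?thesis .
    qed
    show ?thesis
    proof
      assume "psd_mat n (\<rho> - complex_of_real c \<cdot>\<^sub>m \<gamma>)"
      from psd_congr[OF S_c S_h this] show "c \<le> \<mu>" unfolding SYS psdX .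
    next
      assume "c \<le> \<mu>"
      then have "psd_mat n X" using psdX by simp
      from psd_congr[OF R_c R_h this] show "psd_mat n (\<rho> - complex_of_real c \<cdot>\<^sub>m \<gamma>)" unfolding RXR .
    qed
  qed
  have gam_tr: "trace_mat \<gamma> = 1" unfolding gam sp_trace[OF U] using gsum by (metis of_real_1 of_real_sum)
  have tr: "trace_mat (\<rho> - complex_of_real c \<cdot>\<^sub>m \<gamma>) = complex_of_real (1 - c)" for c
    using rho_c gam_c by (simp add: trace_minus[of _ n] trace_smult[of _ n] rho_tr gam_tr)
  have gam_dens: "density_mat n \<gamma>"
    unfolding density_mat_def using gam_tr gpos by (simp add: gam psd_sp[OF U] less_imp_le)
  have mu0: "0 \<le> \<mu>"
  proof -
    have "\<rho> - complex_of_real 0 \<cdot>\<^sub>m \<gamma> = \<rho>" using rho_c gam_c by (intro eq_matI) auto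
    then show ?thesis using K[of 0] rho_psd by simp
  qed
  have mu1: "\<mu> \<le> 1"
  proof -
    have "psd_mat n (\<rho> - complex_of_real \<mu> \<cdot>\<^sub>m \<gamma>)" using K by simp
    from psd_trace(2)[OF this] show ?thesis unfolding tr by simp
  qed
  have a_ge: "0 \<le> a" and a_le: "a \<le> 1" using mu0 mu1 a_mu by auto
  have a0_iff: "a = 0 \<longleftrightarrow> \<rho> = \<gamma>"
  proof
    assume "a = 0"
    then have "\<mu> = 1" using a_mu by simp
    then have P: "psd_mat n (\<rho> - complex_of_real 1 \<cdot>\<^sub>m \<gamma>)" using K[of 1] by (simp only: order_refl)
    have "trace_mat (\<rho> - complex_of_real 1 \<cdot>\<^sub>m \<gamma>) = 0" unfolding tr by simp
    from psd_trace(3)[OF P this] have Z: "\<rho> - complex_of_real 1 \<cdot>\<^sub>m \<gamma> = 0\<^sub>m n n" .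
    show "\<rho> = \<gamma>"
    proof (rule eq_matI)
      fix i j assume ij: "i < dim_row \<gamma>" "j < dim_col \<gamma>"
      have "(\<rho> - complex_of_real 1 \<cdot>\<^sub>m \<gamma>) $$ (i,j) = 0" unfolding Z using ij gam_c by simp
      then show "\<rho> $$ (i,j) = \<gamma> $$ (i,j)" using ij gam_c rho_c by simp
    qed (use rho_c gam_c in auto)
  next
    assume eq: "\<rho> = \<gamma>"
    have "\<rho> - complex_of_real 1 \<cdot>\<^sub>m \<gamma> = complex_of_real 0 \<cdot>\<^sub>m \<rho>"
      unfolding eq using gam_c by (intro eq_matI) auto
    moreover have "psd_mat n (complex_of_real 0 \<cdot>\<^sub>m \<rho>)" by (rule psd_smult[OF _ rho_psd]) simp
    ultimately have "1 \<le> \<mu>" using K[of 1] by simp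
    then show "a = 0" using mu1 a_mu by simp
  qed
  define \<tau>0 where "\<tau>0 = complex_of_real (1 / a) \<cdot>\<^sub>m (\<rho> - complex_of_real (1 - a) \<cdot>\<^sub>m \<gamma>)"
  have tau0: "density_mat n \<tau>0 \<and> \<rho> = complex_of_real (1 - a) \<cdot>\<^sub>m \<gamma> + complex_of_real a \<cdot>\<^sub>m \<tau>0"
    if a0: "a \<noteq> 0"
  proof
    have "psd_mat n (\<rho> - complex_of_real (1 - a) \<cdot>\<^sub>m \<gamma>)" using K a_mu by simp
    then have "psd_mat n \<tau>0" unfolding \<tau>0_def by (rule psd_smult[rotated]) (use a_ge in simp)
    moreover have "trace_mat \<tau>0 = 1"
    proof -
      have mc: "\<rho> - complex_of_real (1 - a) \<cdot>\<^sub>m \<gamma> \<in> carrier_mat n n" using gam_c by (meson minus_carrier_mat smult_carrier_mat)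
      have "trace_mat \<tau>0 = complex_of_real (1 / a) * trace_mat (\<rho> - complex_of_real (1 - a) \<cdot>\<^sub>m \<gamma>)"
        unfolding \<tau>0_def by (rule trace_smult[OF mc])
      also have "\<dots> = complex_of_real (1 / a) * complex_of_real (1 - (1 - a))" by (simp only: tr)
      also have "\<dots> = 1" using a0 by simp
      finally show ?thesis .
    qed
    ultimately show "density_mat n \<tau>0" by (simp add: density_mat_def)
    show "\<rho> = complex_of_real (1 - a) \<cdot>\<^sub>m \<gamma> + complex_of_real a \<cdot>\<^sub>m \<tau>0"
      unfolding \<tau>0_def using rho_c gam_c a0 by (intro eq_matI) (auto simp: algebra_simps)
  qed
  have a_in: "a \<in> athermality_set n \<gamma> \<rho>"
  proof (cases "a = 0")
    case True
    then have "\<rho> = \<gamma>" using a0_iff by simp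
    then have "\<rho> = complex_of_real (1 - a) \<cdot>\<^sub>m \<gamma> + complex_of_real a \<cdot>\<^sub>m \<gamma>"
      using True gam_c by (intro eq_matI) auto
    then show ?thesis unfolding athermality_set_def using gam_dens a_ge by blast
  next
    case False
    then show ?thesis unfolding athermality_set_def using tau0 a_ge by blast
  qed
  have a_min: "\<forall>b \<in> athermality_set n \<gamma> \<rho>. a \<le> b"
  proof
    fix b assume "b \<in> athermality_set n \<gamma> \<rho>"
    then obtain \<tau> where b: "0 \<le> b" and t: "density_mat n \<tau>"
      and eq: "\<rho> = complex_of_real (1 - b) \<cdot>\<^sub>m \<gamma> + complex_of_real b \<cdot>\<^sub>m \<tau>"
      unfolding athermality_set_def by blast
    have tp: "psd_mat n \<tau>" using t by (simp add: density_mat_def)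
    have t_c: "\<tau> \<in> carrier_mat n n" using tp by (simp add: psd_mat_def hermitian_mat_def)
    have "\<rho> - complex_of_real (1 - b) \<cdot>\<^sub>m \<gamma> = complex_of_real b \<cdot>\<^sub>m \<tau>"
      unfolding eq using gam_c t_c by (intro eq_matI) auto
    moreover have "psd_mat n (complex_of_real b \<cdot>\<^sub>m \<tau>)" by (rule psd_smult[OF b tp])
    ultimately have "1 - b \<le> \<mu>" using K[of "1 - b"] by simp
    then show "a \<le> b" using a_mu by simp
  qed
  have w: "weight_of_athermality n \<beta> H \<rho> = a"
    unfolding weight_of_athermality_def \<gamma>_def[symmetric] using a_in a_min by (intro cInf_eq_minimum) auto
  have uniq: "\<rho> \<noteq> \<gamma> \<longrightarrow>
            (\<forall>\<tau>. (density_mat n \<tau> \<and>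
                   \<rho> = complex_of_real (1 - a) \<cdot>\<^sub>m \<gamma> + complex_of_real a \<cdot>\<^sub>m \<tau>)
                 \<longleftrightarrow> \<tau> = complex_of_real (1 / a) \<cdot>\<^sub>m (\<rho> - complex_of_real (1 - a) \<cdot>\<^sub>m \<gamma>))"
  proof (intro impI allI iffI)
    fix \<tau> assume ne: "\<rho> \<noteq> \<gamma>"
    then have a0: "a \<noteq> 0" using a0_iff by simp
    {
      assume H1: "density_mat n \<tau> \<and> \<rho> = complex_of_real (1 - a) \<cdot>\<^sub>m \<gamma> + complex_of_real a \<cdot>\<^sub>m \<tau>"
      have t_c: "\<tau> \<in> carrier_mat n n" using H1 by (simp add: density_mat_def psd_mat_def hermitian_mat_def)
      have eq: "\<rho> = complex_of_real (1 - a) \<cdot>\<^sub>m \<gamma> + complex_of_real a \<cdot>\<^sub>m \<tau>" using H1 by blast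
      show "\<tau> = complex_of_real (1 / a) \<cdot>\<^sub>m (\<rho> - complex_of_real (1 - a) \<cdot>\<^sub>m \<gamma>)"
        unfolding eq using t_c gam_c a0 by (intro eq_matI) (auto simp: field_simps)
    }
    {
      assume "\<tau> = complex_of_real (1 / a) \<cdot>\<^sub>m (\<rho> - complex_of_real (1 - a) \<cdot>\<^sub>m \<gamma>)"
      then show "density_mat n \<tau> \<and> \<rho> = complex_of_real (1 - a) \<cdot>\<^sub>m \<gamma> + complex_of_real a \<cdot>\<^sub>m \<tau>"
        using tau0[OF a0] unfolding \<tau>0_def by simp
    }
  qed
  show ?thesis using a_in a_min w a_ge a_le a0_iff uniq by blast
qed

end
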